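(* Let $n$ be a positive integer and let $K$ and $L$ be number fields of degree $n$, both Galois over $\mathbb{Q}$, contained in a fixed algebraic closure of $\mathbb{Q}$. If $\delta_{K,L}>1-\frac{2}{n^2}$, then $K=L$.
   Context: $\widetilde E$ denotes the Galois closure of a number field $E$ over $\mathbb{Q}$ and $\widetilde K\widetilde L$ the compositum; $\delta_{K,L}:=\frac{2}{[\widetilde K\widetilde L:\mathbb{Q}]}+1-\frac{1}{[\widetilde K:\mathbb{Q}]}-\frac{1}{[\widetilde L:\mathbb{Q}]}$. *)

theory Defs
  imports "HOL-Computational_Algebra.Polynomial" Complex_Main
begin

text \<open>Ambient algebraic closure of Q: number fields are taken as subfields of the complex numbers.\<close>

definition subfield_of_C :: "complex set \<Rightarrow> bool" where
  "subfield_of_C F \<longleftrightarrow> 0 \<in> F \<and> 1 \<in> F \<and>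
     (\<forall>x\<in>F. \<forall>y\<in>F. x + y \<in> F \<and> x - y \<in> F \<and> x * y \<in> F) \<and>
     (\<forall>x\<in>F. x \<noteq> 0 \<longrightarrow> inverse x \<in> F)"

definition qdeg :: "complex set \<Rightarrow> nat" where
  "qdeg F = vector_space.dim (\<lambda>(q::rat) (z::complex). of_rat q * z) F"

definition qfinite_dim :: "complex set \<Rightarrow> bool" where
  "qfinite_dim F \<longleftrightarrow> (\<exists>B. finite B \<and>
     F \<subseteq> module.span (\<lambda>(q::rat) (z::complex). of_rat q * z) B)"

definition number_field :: "complex set \<Rightarrow> bool" where
  "number_field F \<longleftrightarrow> subfield_of_C F \<and> qfinite_dim F"

text \<open>Normal over Q (Galois, as char 0): every irreducible rational polynomial having a root
  in F has all its roots in F.\<close>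

definition normal_over_Q :: "complex set \<Rightarrow> bool" where
  "normal_over_Q F \<longleftrightarrow> (\<forall>p :: rat poly. irreducible p \<longrightarrow>
      (\<exists>a\<in>F. poly (map_poly of_rat p) a = 0) \<longrightarrow>
      (\<forall>b. poly (map_poly of_rat p) b = 0 \<longrightarrow> b \<in> F))"

definition galois_over_Q :: "complex set \<Rightarrow> bool" where
  "galois_over_Q F \<longleftrightarrow> number_field F \<and> normal_over_Q F"

definition galois_closure :: "complex set \<Rightarrow> complex set" where
  "galois_closure F = \<Inter>{E. subfield_of_C E \<and> normal_over_Q E \<and> F \<subseteq> E}"

definition compositum :: "complex set \<Rightarrow> complex set \<Rightarrow> complex set" where
  "compositum K L = \<Inter>{E. subfield_of_C E \<and> K \<union> L \<subseteq> E}"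

definition delta :: "complex set \<Rightarrow> complex set \<Rightarrow> real" where
  "delta K L = 2 / real (qdeg (compositum (galois_closure K) (galois_closure L)))
      + 1 - 1 / real (qdeg (galois_closure K)) - 1 / real (qdeg (galois_closure L))"

end

theory Submission imports Defs begin
interpretation Q: vector_space "\<lambda>(q::rat) (z::complex). of_rat q * z"
  by unfold_locales (auto simp: algebra_simps of_rat_add of_rat_mult)

lemma sub_nat: "subfield_of_C F \<Longrightarrow> of_nat k \<in> F"
  by (induction k) (auto simp: subfield_of_C_def)

lemma sub_int: "subfield_of_C F \<Longrightarrow> of_int k \<in> F"
proof (cases "k \<ge> 0")
  case True
  assume F: "subfield_of_C F"
  then show ?thesis using True sub_nat[OF F, of "nat k"] by simp
next
  case False
  assume F: "subfield_of_C F"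
  have "of_int k = (0::complex) - of_nat (nat (-k))" using False by simp
  then show ?thesis using F sub_nat[OF F, of "nat (-k)"] unfolding subfield_of_C_def by metis
qed

lemma sub_div: "subfield_of_C F \<Longrightarrow> x \<in> F \<Longrightarrow> y \<in> F \<Longrightarrow> x / y \<in> F"
  unfolding subfield_of_C_def by (cases "y = 0") (auto simp: divide_inverse)

lemma sub_rat: "subfield_of_C F \<Longrightarrow> of_rat q \<in> F"
proof -
  assume F: "subfield_of_C F"
  obtain a b where ab: "quotient_of q = (a, b)" by (cases "quotient_of q")
  have "q = of_int a / of_int b" using quotient_of_div[OF ab] .
  then have "of_rat q = (of_int a / of_int b :: complex)" by (simp add: of_rat_divide)
  then show ?thesis using sub_div[OF F sub_int[OF F] sub_int[OF F]] by simp
qed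

lemma sub_subspace: "subfield_of_C F \<Longrightarrow> Q.subspace F"
  unfolding Q.subspace_def using sub_rat by (auto simp: subfield_of_C_def)

lemma galois_closure_self: "galois_over_Q K \<Longrightarrow> galois_closure K = K"
  unfolding galois_closure_def galois_over_Q_def number_field_def by blast

lemma compositum_sub: "subfield_of_C (compositum K L)"
  unfolding compositum_def subfield_of_C_def by auto

lemma compositum_ge: "K \<union> L \<subseteq> compositum K L"
  unfolding compositum_def by auto

lemma compositum_comm: "compositum K L = compositum L K"
  unfolding compositum_def by (simp add: Un_commute)

lemma finite_basis_of:
  assumes "qfinite_dim K"
  obtains B where "B \<subseteq> K" "Q.independent B" "K \<subseteq> Q.span B" "card B = qdeg K" "finite B"
proof -
  obtain W where W: "finite W" "K \<subseteq> Q.span W" using assms unfolding qfinite_dim_def by auto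
  obtain B where B: "B \<subseteq> K" "Q.independent B" "K \<subseteq> Q.span B" "card B = Q.dim K"
    using Q.basis_exists by blast
  have "finite B" using Q.independent_span_bound[OF W(1) B(2)] B(1) W(2) by auto
  then show ?thesis using that B unfolding qdeg_def by auto
qed

lemma double_bound:
  assumes K: "subfield_of_C K" and fK: "qfinite_dim K" and E: "subfield_of_C E"
    and KE: "K \<subseteq> E" and x: "x \<in> E" "x \<notin> K" and pos: "qdeg E > 0"
  shows "2 * qdeg K \<le> qdeg E"
proof -
  obtain B where B: "B \<subseteq> K" "Q.independent B" "K \<subseteq> Q.span B" "card B = qdeg K" "finite B"
    using finite_basis_of[OF fK] by blast
  have spanB: "Q.span B = K" using Q.span_subspace[OF B(1) B(3) sub_subspace[OF K]] .
  obtain C where C: "C \<subseteq> E" "Q.independent C" "E \<subseteq> Q.span C" "card C = Q.dim E"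
    using Q.basis_exists by blast
  have fC: "finite C" using C(4) pos unfolding qdeg_def using card_gt_0_iff by metis
  have x0: "x \<noteq> 0" using x K unfolding subfield_of_C_def by auto
  have B0: "0 \<notin> B" using B(2) Q.dependent_zero by blast
  define D where "D = B \<union> (\<lambda>b. x * b) ` B"
  have disj: "B \<inter> (\<lambda>b. x * b) ` B = {}"
  proof (rule ccontr)
    assume "B \<inter> (\<lambda>b. x * b) ` B \<noteq> {}"
    then obtain b b' where bb: "b \<in> B" "b' \<in> B" "b' = x * b" by auto
    have "b \<noteq> 0" using bb B0 by auto
    then have "x = b' / b" using bb by auto
    moreover have "b' / b \<in> K" using sub_div[OF K] bb B(1) by blast
    ultimately show False using x by auto
  qed
  have inj: "inj_on (\<lambda>b. x * b) B" using x0 by (auto simp: inj_on_def)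
  have cardD: "card D = 2 * card B"
    unfolding D_def using card_Un_disjoint[OF B(5) _ disj] card_image[OF inj] B(5) by auto
  have finD: "finite D" unfolding D_def using B(5) by auto
  have DE: "D \<subseteq> E" unfolding D_def using B(1) KE x E unfolding subfield_of_C_def by blast
  have indD: "Q.independent D"
  proof (rule Q.independent_if_scalars_zero[OF finD])
    fix f d
    assume s: "(\<Sum>d\<in>D. complex_of_rat (f d) * d) = 0" and d: "d \<in> D"
    define u where "u = (\<Sum>b\<in>B. complex_of_rat (f b) * b)"
    define v where "v = (\<Sum>b\<in>B. complex_of_rat (f (x * b)) * b)"
    have "(\<Sum>d\<in>D. complex_of_rat (f d) * d) = u + (\<Sum>d\<in>(\<lambda>b. x * b) ` B. complex_of_rat (f d) * d)"
      unfolding D_def u_def by (rule sum.union_disjoint[OF B(5) _ disj]) (use B(5) in auto)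
    also have "(\<Sum>d\<in>(\<lambda>b. x * b) ` B. complex_of_rat (f d) * d) = x * v"
      unfolding v_def sum.reindex[OF inj] sum_distrib_left by (rule sum.cong) auto
    finally have uv: "u + x * v = 0" using s by simp
    have uK: "u \<in> K" unfolding u_def spanB[symmetric]
      by (intro Q.span_sum Q.span_scale Q.span_base)
    have vK: "v \<in> K" unfolding v_def spanB[symmetric]
      by (intro Q.span_sum Q.span_scale Q.span_base)
    have v0: "v = 0"
    proof (rule ccontr)
      assume "v \<noteq> 0"
      have "x * v = 0 - u" using uv by (simp add: eq_neg_iff_add_eq_0 add.commute)
      then have xe: "x = (0 - u) / v" using \<open>v \<noteq> 0\<close> by (metis nonzero_mult_div_cancel_right)
      have "0 - u \<in> K" using uK K unfolding subfield_of_C_def by blast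
      then have "(0 - u) / v \<in> K" using sub_div[OF K _ vK] by blast
      then show False using x xe by auto
    qed
    then have u0: "u = 0" using uv by simp
    have IB: "\<And>g. (\<Sum>b\<in>B. complex_of_rat (g b) * b) = 0 \<Longrightarrow> \<forall>b\<in>B. g b = 0"
      using B(2) B(5) unfolding Q.independent_explicit_finite_subsets by blast
    have f1: "\<forall>b\<in>B. f b = 0" using IB[of f] u0 unfolding u_def by blast
    have f2: "\<forall>b\<in>B. f (x * b) = 0" using IB[of "\<lambda>b. f (x * b)"] v0 unfolding v_def by blast
    show "f d = 0" using d f1 f2 unfolding D_def by auto
  qed
  have "card D \<le> card C"
    using Q.independent_span_bound[OF fC indD] DE C(3) by auto
  then show ?thesis using cardD B(4) C(4) unfolding qdeg_def by simp
qed

lemma deg1: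
  assumes K: "subfield_of_C K" and L: "subfield_of_C L" and fL: "qfinite_dim L"
    and d: "qdeg L = 1" and x: "x \<in> L" "x \<notin> K"
  shows False
proof -
  obtain B where B: "B \<subseteq> L" "Q.independent B" "L \<subseteq> Q.span B" "card B = qdeg L" "finite B"
    using finite_basis_of[OF fL] by blast
  have i1: "Q.independent {1}"
    using Q.independent_insertI[of 1 "{}"] Q.independent_empty Q.span_empty by auto
  have "Q.span {1} \<subseteq> K"
    using Q.span_minimal[OF _ sub_subspace[OF K], of "{1}"] K unfolding subfield_of_C_def by auto
  then have "x \<notin> Q.span {1}" using x by auto
  then have i2: "Q.independent {x, 1}" using Q.independent_insertI[OF _ i1] by auto
  have x1: "x \<noteq> 1" using x K unfolding subfield_of_C_def by auto
  have "{x, 1} \<subseteq> L" using x L unfolding subfield_of_C_def by auto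
  then have "card {x, 1} \<le> card B" using Q.independent_span_bound[OF B(5) i2] B(3) by auto
  then show False using x1 B(4) d by simp
qed

lemma arith1:
  fixes n m :: nat
  assumes "n \<ge> 2" "m = 0 \<or> 2 * n \<le> m"
    and "2 / real m + 1 - 1 / real n - 1 / real n > 1 - 2 / (real n)^2"
  shows False
  using assms(2)
proof
  assume "m = 0"
  then have "2 / (real n)^2 > 2 / real n" using assms(3) by simp
  moreover have "real n \<le> (real n)^2" using assms(1) by (simp add: power2_eq_square)
  moreover have "0 < real n * (real n)^2" using assms(1) by simp
  ultimately have "2 / (real n)^2 \<le> 2 / real n"
    by (intro divide_left_mono) (auto simp: mult.commute)
  then show False using \<open>2 / (real n)^2 > 2 / real n\<close> by simp
next
  assume m: "2 * n \<le> m"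
  have n0: "real n \<ge> 2" using assms(1) by simp
  have "2 / real m \<le> 2 / (2 * real n)"
    using m n0 by (intro divide_left_mono) (auto simp del: of_nat_mult simp: of_nat_mult[symmetric])
  then have "2 / real m \<le> 1 / real n" by simp
  then have "1 / real n < 2 / (real n)^2" using assms(3) by linarith
  then have "real n * real n < 2 * real n" using n0 by (simp add: field_simps power2_eq_square)
  then show False using n0 by (simp add: mult_less_cancel_right)
qed

theorem theorem3p7:
  fixes n :: nat and K L :: "complex set"
  assumes "n > 0"
    and "number_field K" and "number_field L"
    and "qdeg K = n" and "qdeg L = n"
    and "galois_over_Q K" and "galois_over_Q L"
    and "delta K L > 1 - 2 / (real n)^2"
  shows "K = L"
proof (rule ccontr)
  assume ne: "K \<noteq> L"
  have K: "subfield_of_C K" "qfinite_dim K" using assms(2) unfolding number_field_def by auto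
  have L: "subfield_of_C L" "qfinite_dim L" using assms(3) unfolding number_field_def by auto
  define m where "m = qdeg (compositum K L)"
  have dl: "delta K L = 2 / real m + 1 - 1 / real n - 1 / real n"
    unfolding delta_def m_def galois_closure_self[OF assms(6)] galois_closure_self[OF assms(7)]
    using assms(4,5) by simp
  obtain x where x: "(x \<in> L \<and> x \<notin> K) \<or> (x \<in> K \<and> x \<notin> L)" using ne by blast
  have "n \<noteq> 1"
  proof
    assume "n = 1"
    then show False using x deg1[OF K(1) L(1) L(2)] deg1[OF L(1) K(1) K(2)] assms(4,5) by auto
  qed
  then have n2: "n \<ge> 2" using assms(1) by simp
  have "m = 0 \<or> 2 * n \<le> m"
  proof (cases "m = 0")
    case False
    then have pos: "qdeg (compositum K L) > 0" unfolding m_def by simp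
    show ?thesis using x
    proof
      assume "x \<in> L \<and> x \<notin> K"
      then show ?thesis using double_bound[OF K(1) K(2) compositum_sub[of K L], where x=x] compositum_ge[of K L]
          pos assms(4) unfolding m_def by auto
    next
      assume "x \<in> K \<and> x \<notin> L"
      then show ?thesis using double_bound[OF L(1) L(2) compositum_sub[of L K], where x=x] compositum_ge[of L K]
          pos assms(5) compositum_comm[of K L] unfolding m_def by auto
    qed
  qed simp
  then show False using arith1[OF n2] assms(8) dl by auto
qed

end
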